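(* Fix $\beta>2$ and let $F_\beta(\mathbf{x},r)$, $r_1^\beta<r_2^\beta$, $\boldsymbol{\sigma}_0^\beta(r)$, $\boldsymbol{\sigma}_1^\beta(r)$, $\mathbf{p}^\beta(r)$ be as in the context. Let $h_0^\beta(r)=F_\beta(\boldsymbol{\sigma}_0^\beta(r),r)$ and $h_1^\beta(r)=F_\beta(\boldsymbol{\sigma}_1^\beta(r),r)$ if $r\in(0,r_1^\beta)$, $h_1^\beta(r)=F_\beta(\mathbf{p}^\beta(r),r)$ if $r\in(r_1^\beta,r_2^\beta)$. Then $h_0^\beta(r)<h_1^\beta(r)$ for all $r\in(0,r_1^\beta)\cup(r_1^\beta,r_2^\beta)$.
   Context: $\Xi=\{(x_1,x_2): x_1,x_2\ge0,\ x_1+x_2\le1\}$, $x_0=1-x_1-x_2$, $\mathbf{v}_k=(\cos(2\pi k/3),\sin(2\pi k/3))$, $F_\beta(\mathbf{x},r)=-\frac12|\sum_{k=0}^2x_k\mathbf{v}_k|^2+\frac1\beta\sum_{k=0}^2x_k\log(3x_k)+r\,x_0-\frac r2(x_1+x_2)$ (external field of magnitude $r$, angle $\pi$). Let $h(t)=-3t(1-2t)\log\frac{1-2t}{t}-3t+1$, $f_r(t)=\frac{2}{3(1-r-3t)}\log\frac{1-2t}{t}$, $k_r=(1-r)/3$; for $0<r<1$, $m_0(r)$ is the unique solution in $(0,k_r)$ of $h(t)=r$; $r_2^\beta$ is the unique $r\in(0,1)$ with $f_r(m_0(r))=\beta$; $r_1^\beta=1-\frac2\beta-\frac{2}{3\beta}\log(\frac{3\beta}2-2)$.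 For every $r>0$, $q_\beta(r)$ is the unique solution of $f_r(t)=\beta$ in $(1/3,1/2)$ and $\boldsymbol{\sigma}_0^\beta(r)=(q_\beta(r),q_\beta(r))$; for $r\in(0,r_2^\beta)$, $u_\beta(r)$ is the unique solution of $f_r(t)=\beta$ in $(m_0(r),k_r)$ and $\mathbf{p}^\beta(r)=(u_\beta(r),u_\beta(r))$. Let $G_\beta(x)=\frac1\beta\log x-\frac32x$, $l_\beta=2/(3\beta)$, $g_\beta=G_\beta(l_\beta)$; for $y<g_\beta$, $H_\beta(y)<l_\beta<K_\beta(y)$ solve $G_\beta(x)=y$, and $H_\beta(g_\beta)=K_\beta(g_\beta)=l_\beta$. For $r\le r_1^\beta$, $y_1^\beta(r)$ is the unique $y\le g_\beta$ with $K_\beta(y-3r/2)+H_\beta(y)+K_\beta(y)=1$, and $\boldsymbol{\sigma}_1^\beta(r)=(K_\beta(y_1^\beta(r)),H_\beta(y_1^\beta(r)))$. *)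

theory Defs
  imports Complex_Main
begin

definition vv :: "nat \<Rightarrow> real \<times> real" where
  "vv k = (cos (2 * pi * real k / 3), sin (2 * pi * real k / 3))"

definition Fbeta :: "real \<Rightarrow> real \<times> real \<Rightarrow> real \<Rightarrow> real" where
  "Fbeta \<beta> x r =
     (let x1 = fst x; x2 = snd x; x0 = 1 - x1 - x2;
          xs = (\<lambda>k::nat. if k = 0 then x0 else if k = 1 then x1 else x2);
          s1 = (\<Sum>k<3. xs k * fst (vv k));
          s2 = (\<Sum>k<3. xs k * snd (vv k))
      in - (1/2) * (s1\<^sup>2 + s2\<^sup>2) + (1/\<beta>) * (\<Sum>k<3. xs k * ln (3 * xs k))
         + r * x0 - (r/2) * (x1 + x2))"

definition hfun :: "real \<Rightarrow> real" where
  "hfun t = - 3 * t * (1 - 2*t) * ln ((1 - 2*t) / t) - 3 * t + 1"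

definition ffun :: "real \<Rightarrow> real \<Rightarrow> real" where
  "ffun r t = 2 / (3 * (1 - r - 3*t)) * ln ((1 - 2*t) / t)"

definition kr :: "real \<Rightarrow> real" where
  "kr r = (1 - r) / 3"

definition m0 :: "real \<Rightarrow> real" where
  "m0 r = (THE t. 0 < t \<and> t < kr r \<and> hfun t = r)"

definition r2 :: "real \<Rightarrow> real" where
  "r2 \<beta> = (THE r. 0 < r \<and> r < 1 \<and> ffun r (m0 r) = \<beta>)"

definition r1 :: "real \<Rightarrow> real" where
  "r1 \<beta> = 1 - 2/\<beta> - 2/(3*\<beta>) * ln (3*\<beta>/2 - 2)"

definition qb :: "real \<Rightarrow> real \<Rightarrow> real" where
  "qb \<beta> r = (THE t. 1/3 < t \<and> t < 1/2 \<and> ffun r t = \<beta>)"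

definition sigma0 :: "real \<Rightarrow> real \<Rightarrow> real \<times> real" where
  "sigma0 \<beta> r = (qb \<beta> r, qb \<beta> r)"

definition ub :: "real \<Rightarrow> real \<Rightarrow> real" where
  "ub \<beta> r = (THE t. m0 r < t \<and> t < kr r \<and> ffun r t = \<beta>)"

definition pb :: "real \<Rightarrow> real \<Rightarrow> real \<times> real" where
  "pb \<beta> r = (ub \<beta> r, ub \<beta> r)"

definition Gb :: "real \<Rightarrow> real \<Rightarrow> real" where
  "Gb \<beta> x = (1/\<beta>) * ln x - 3/2 * x"

definition lb :: "real \<Rightarrow> real" where
  "lb \<beta> = 2 / (3*\<beta>)"

definition gb :: "real \<Rightarrow> real" where
  "gb \<beta> = Gb \<beta> (lb \<beta>)"

definition Hb :: "real \<Rightarrow> real \<Rightarrow> real" where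
  "Hb \<beta> y = (THE x. 0 < x \<and> x \<le> lb \<beta> \<and> Gb \<beta> x = y)"

definition Kb :: "real \<Rightarrow> real \<Rightarrow> real" where
  "Kb \<beta> y = (THE x. lb \<beta> \<le> x \<and> Gb \<beta> x = y)"

definition y1 :: "real \<Rightarrow> real \<Rightarrow> real" where
  "y1 \<beta> r = (THE y. y \<le> gb \<beta> \<and> Kb \<beta> (y - 3*r/2) + Hb \<beta> y + Kb \<beta> y = 1)"

definition sigma1 :: "real \<Rightarrow> real \<Rightarrow> real \<times> real" where
  "sigma1 \<beta> r = (Kb \<beta> (y1 \<beta> r), Hb \<beta> (y1 \<beta> r))"

end

theory Submission
  imports Defs
begin

definition PP :: "real \<Rightarrow> real \<Rightarrow> real" where
  "PP \<beta> x = x * ln x / \<beta> - 3/4 * x^2"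

lemma vv_vals: "vv 0 = (1,0)" "vv 1 = (-1/2, sqrt 3/2)" "vv 2 = (-1/2, - sqrt 3/2)"
proof -
  show "vv 0 = (1,0)" by (simp add: vv_def)
  show "vv 1 = (-1/2, sqrt 3/2)" by (simp add: vv_def cos_120 sin_120)
  have eq: "2 * pi * real 2 / 3 = pi/3 + pi" by simp
  have "cos (2 * pi * real 2 / 3) = -1/2"
    unfolding eq by (simp only: cos_add cos_60 sin_60 cos_pi sin_pi)
  moreover have "sin (2 * pi * real 2 / 3) = - sqrt 3/2"
    unfolding eq by (simp only: sin_add cos_60 sin_60 cos_pi sin_pi)
  ultimately show "vv 2 = (-1/2, - sqrt 3/2)" by (simp add: vv_def)

qed

lemma vv1': "vv (Suc 0) = (-1/2, sqrt 3/2)" using vv_vals(2) by simp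

lemma master:
  assumes "0 < x1" "0 < x2" "0 < 1 - x1 - x2"
  shows "Fbeta \<beta> (x1,x2) r = 1/4 - r/2 + ln 3/\<beta> + PP \<beta> (1-x1-x2) + PP \<beta> x1 + PP \<beta> x2
           + 3*r/2*(1-x1-x2)"
proof -
  define x0 where "x0 = 1 - x1 - x2"
  have x0: "0 < x0" using assms x0_def by simp
  have l: "\<And>x::real. 0 < x \<Longrightarrow> ln (3*x) = ln 3 + ln x" by (simp add: ln_mult)
  have e: "(\<Sum>k<3. f k) = f 0 + f 1 + (f 2::real)" for f :: "nat \<Rightarrow> real" by (simp add: eval_nat_numeral)
  let ?xs = "(\<lambda>k::nat. if k = 0 then x0 else if k = 1 then x1 else x2)"
  have s1: "(\<Sum>k<3. ?xs k * fst (vv k)) = x0 - (x1+x2)/2" unfolding e by (simp add: vv_vals vv1' field_simps)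
  have s2: "(\<Sum>k<3. ?xs k * snd (vv k)) = sqrt 3/2 * (x1-x2)" unfolding e by (simp add: vv_vals vv1' algebra_simps)
  have s3: "(\<Sum>k<3. ?xs k * ln (3 * ?xs k)) = ln 3 + x0 * ln x0 + x1 * ln x1 + x2 * ln x2"
    proof -
      have "x0 * ln 3 + x1 * ln 3 + x2 * ln 3 = ln 3" unfolding x0_def by (simp add: algebra_simps)
      thus ?thesis unfolding e using l[OF x0] l[OF assms(1)] l[OF assms(2)] by (simp add: algebra_simps)
    qed
  have q: "(sqrt 3/2 * (x1-x2))^2 = 3/4*(x1-x2)^2" by (simp add: power_mult_distrib power_divide)
  have "Fbeta \<beta> (x1,x2) r = - (1/2) * ((x0 - (x1+x2)/2)^2 + 3/4*(x1-x2)^2)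
     + (1/\<beta>) * (ln 3 + x0 * ln x0 + x1 * ln x1 + x2 * ln x2) + r * x0 - (r/2) * (x1 + x2)"
    unfolding Fbeta_def Let_def fst_conv snd_conv x0_def[symmetric] s1 s2 s3 q by simp
  also have "\<dots> = 1/4 - r/2 + ln 3/\<beta> + PP \<beta> x0 + PP \<beta> x1 + PP \<beta> x2 + 3*r/2*x0"
    unfolding PP_def x0_def by (simp add: power2_eq_square algebra_simps add_divide_distrib diff_divide_distrib)
  finally show ?thesis unfolding x0_def .
qed
lemma lb_facts: assumes "\<beta> > 2" shows "0 < lb \<beta>" "3 * lb \<beta> < 1" "lb \<beta> * \<beta> = 2/3"
  using assms by (auto simp: lb_def field_simps)

lemma G_inc:
  assumes b: "\<beta> > 2" and "0 < x" "x < x'" "x' \<le> lb \<beta>"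
  shows "Gb \<beta> x < Gb \<beta> x'"
proof -
  have "ln x - ln x' < (x - x')/x'" using assms by (intro ln_diff_less) auto
  moreover have "(x - x')/x' = - ((x'-x)/x')" by (metis minus_diff_eq minus_divide_left)
  ultimately have "ln x' - ln x > (x' - x)/x'" by linarith
  moreover have "(x' - x)/x' \<ge> (x'-x)/lb \<beta>" using assms lb_facts[OF b]
    by (intro divide_left_mono) auto
  ultimately have "ln x' - ln x > (x'-x)/lb \<beta>" by simp
  hence "(ln x' - ln x)/\<beta> > (x'-x)/lb \<beta>/\<beta>" by (rule divide_strict_right_mono) (use b in auto)
  moreover have "(x'-x)/lb \<beta>/\<beta> = 3/2*(x'-x)" using b by (simp add: lb_def field_simps)
  moreover have "Gb \<beta> x' - Gb \<beta> x = (ln x' - ln x)/\<beta> - 3/2*(x'-x)"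
    unfolding Gb_def by (simp add: algebra_simps diff_divide_distrib)
  ultimately show ?thesis by linarith
qed

lemma G_dec:
  assumes b: "\<beta> > 2" and "lb \<beta> \<le> x" "x < x'"
  shows "Gb \<beta> x' < Gb \<beta> x"
proof -
  have xp: "0 < x" using assms lb_facts[OF b] by linarith
  have "ln x' - ln x < (x' - x)/x" using assms xp by (intro ln_diff_less) auto
  moreover have "(x' - x)/x \<le> (x'-x)/lb \<beta>" using assms lb_facts[OF b]
    by (intro divide_left_mono) auto
  ultimately have "ln x' - ln x < (x'-x)/lb \<beta>" by simp
  hence "(ln x' - ln x)/\<beta> < (x'-x)/lb \<beta>/\<beta>" by (rule divide_strict_right_mono) (use b in auto)
  moreover have "(x'-x)/lb \<beta>/\<beta> = 3/2*(x'-x)" using b by (simp add: lb_def field_simps)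
  moreover have "Gb \<beta> x' - Gb \<beta> x = (ln x' - ln x)/\<beta> - 3/2*(x'-x)"
    unfolding Gb_def by (simp add: algebra_simps diff_divide_distrib)
  ultimately show ?thesis by linarith
qed

lemma G_le_g: assumes b: "\<beta> > 2" and "0 < x" shows "Gb \<beta> x \<le> gb \<beta>"
  using G_inc[OF b, of x "lb \<beta>"] G_dec[OF b, of "lb \<beta>" x] assms unfolding gb_def
  by (cases x "lb \<beta>" rule: linorder_cases) auto

lemma G_cont: "0 < a \<Longrightarrow> continuous_on {a..b} (Gb \<beta>)"
  unfolding Gb_def by (intro continuous_intros) auto

lemma H_ex: assumes b: "\<beta> > 2" and y: "y \<le> gb \<beta>"
  shows "\<exists>x. 0 < x \<and> x \<le> lb \<beta> \<and> Gb \<beta> x = y"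
proof -
  define e where "e = min (lb \<beta>) (exp (\<beta>*y))"
  have e0: "0 < e" using lb_facts[OF b] by (simp add: e_def)
  have "ln e \<le> \<beta> * y" unfolding e_def using lb_facts[OF b]
    by (metis e0 e_def exp_le_cancel_iff exp_ln min.cobounded2)
  hence "ln e / \<beta> \<le> y" using b by (simp add: divide_le_eq mult.commute)
  moreover have "Gb \<beta> e = ln e/\<beta> - 3/2*e" by (simp add: Gb_def)
  ultimately have "Gb \<beta> e \<le> y" using e0 by linarith
  moreover have "e \<le> lb \<beta>" by (simp add: e_def)
  ultimately obtain x where "e \<le> x" "x \<le> lb \<beta>" "Gb \<beta> x = y"
    using IVT'[of "Gb \<beta>" e y "lb \<beta>"] y G_cont[OF e0] unfolding gb_def by auto
  thus ?thesis using e0 by (intro exI[of _ x]) auto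
qed

lemma K_ex: assumes b: "\<beta> > 2" and y: "y \<le> gb \<beta>"
  shows "\<exists>x. lb \<beta> \<le> x \<and> Gb \<beta> x = y"
proof -
  define M where "M = max (lb \<beta>) (\<bar>y\<bar> + 1)"
  have M0: "0 < M" "lb \<beta> \<le> M" "\<bar>y\<bar> + 1 \<le> M" by (auto simp: M_def)
  have "ln M \<le> M - 1" using M0 by (intro ln_le_minus_one) auto
  hence "ln M / \<beta> \<le> M / \<beta>" using b by (intro divide_right_mono) auto
  moreover have "M/\<beta> \<le> M/2" using M0 b by (intro divide_left_mono) auto
  moreover have "Gb \<beta> M = ln M/\<beta> - 3/2*M" by (simp add: Gb_def)
  ultimately have "Gb \<beta> M \<le> y" using M0 by linarith
  then obtain x where "lb \<beta> \<le> x" "x \<le> M" "Gb \<beta> x = y"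
    using IVT2'[of "Gb \<beta>" M y "lb \<beta>"] y G_cont[OF lb_facts(1)[OF b]] M0 unfolding gb_def by auto
  thus ?thesis by auto
qed

lemma H_unique: assumes b: "\<beta> > 2" "0 < x" "x \<le> lb \<beta>" "0 < x'" "x' \<le> lb \<beta>" "Gb \<beta> x = Gb \<beta> x'"
  shows "x = x'"
  using G_inc[OF b(1), of x x'] G_inc[OF b(1), of x' x] assms by (cases x x' rule: linorder_cases) auto

lemma K_unique: assumes b: "\<beta> > 2" "lb \<beta> \<le> x" "lb \<beta> \<le> x'" "Gb \<beta> x = Gb \<beta> x'"
  shows "x = x'"
  using G_dec[OF b(1), of x x'] G_dec[OF b(1), of x' x] assms by (cases x x' rule: linorder_cases) auto

lemma H_prop: assumes b: "\<beta> > 2" and y: "y \<le> gb \<beta>"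
  shows "0 < Hb \<beta> y" "Hb \<beta> y \<le> lb \<beta>" "Gb \<beta> (Hb \<beta> y) = y"
proof -
  have "0 < Hb \<beta> y \<and> Hb \<beta> y \<le> lb \<beta> \<and> Gb \<beta> (Hb \<beta> y) = y"
    unfolding Hb_def by (rule theI') (use H_ex[OF assms] H_unique[OF b] in metis)
  thus "0 < Hb \<beta> y" "Hb \<beta> y \<le> lb \<beta>" "Gb \<beta> (Hb \<beta> y) = y" by auto
qed

lemma K_prop: assumes b: "\<beta> > 2" and y: "y \<le> gb \<beta>"
  shows "lb \<beta> \<le> Kb \<beta> y" "Gb \<beta> (Kb \<beta> y) = y"
proof -
  have "lb \<beta> \<le> Kb \<beta> y \<and> Gb \<beta> (Kb \<beta> y) = y"
    unfolding Kb_def by (rule theI') (use K_ex[OF assms] K_unique[OF b] in metis)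
  thus "lb \<beta> \<le> Kb \<beta> y" "Gb \<beta> (Kb \<beta> y) = y" by auto
qed

lemma H_eq: assumes b: "\<beta> > 2" "0 < x" "x \<le> lb \<beta>" shows "Hb \<beta> (Gb \<beta> x) = x"
  using H_prop[OF b(1) G_le_g[OF b(1,2)]] H_unique[OF b(1)] assms by metis

lemma K_eq: assumes b: "\<beta> > 2" "lb \<beta> \<le> x" shows "Kb \<beta> (Gb \<beta> x) = x"
proof -
  have "0 < x" using lb_facts[OF b(1)] b by linarith
  thus ?thesis using K_prop[OF b(1) G_le_g[OF b(1)]] K_unique[OF b(1)] assms by metis
qed

lemma H_mono: assumes b: "\<beta> > 2" and "y < y'" "y' \<le> gb \<beta>" shows "Hb \<beta> y < Hb \<beta> y'"
proof -
  have y: "y \<le> gb \<beta>" using assms by simp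
  note A = H_prop[OF b y] and B = H_prop[OF b assms(3)]
  show ?thesis
  proof (rule ccontr)
    assume "\<not> ?thesis"
    hence "Hb \<beta> y' \<le> Hb \<beta> y" by simp
    hence "Gb \<beta> (Hb \<beta> y') \<le> Gb \<beta> (Hb \<beta> y)"
      using G_inc[OF b, of "Hb \<beta> y'" "Hb \<beta> y"] A B by (cases "Hb \<beta> y' = Hb \<beta> y") auto
    thus False using A B assms by simp
  qed
qed

lemma K_mono: assumes b: "\<beta> > 2" and "y < y'" "y' \<le> gb \<beta>" shows "Kb \<beta> y' < Kb \<beta> y"
proof -
  have y: "y \<le> gb \<beta>" using assms by simp
  note A = K_prop[OF b y] and B = K_prop[OF b assms(3)]
  show ?thesis
  proof (rule ccontr)
    assume "\<not> ?thesis"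
    hence "Kb \<beta> y \<le> Kb \<beta> y'" by simp
    hence "Gb \<beta> (Kb \<beta> y') \<le> Gb \<beta> (Kb \<beta> y)"
      using G_dec[OF b, of "Kb \<beta> y" "Kb \<beta> y'"] A B by (cases "Kb \<beta> y' = Kb \<beta> y") auto
    thus False using A B assms by simp
  qed
qed

lemma H_cont: assumes b: "\<beta> > 2" and c: "c \<le> gb \<beta>" shows "continuous_on {c..gb \<beta>} (Hb \<beta>)"
proof -
  define e where "e = Hb \<beta> c"
  have e0: "0 < e" using H_prop[OF b c] e_def by simp
  have "continuous_on (Gb \<beta> ` {e..lb \<beta>}) (Hb \<beta>)"
    by (rule continuous_on_inv[OF G_cont[OF e0]]) (use H_eq[OF b] e0 in auto)
  moreover have "{c..gb \<beta>} \<subseteq> Gb \<beta> ` {e..lb \<beta>}"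
  proof
    fix y assume y: "y \<in> {c..gb \<beta>}"
    have "e \<le> Hb \<beta> y" using H_mono[OF b, of c y] y e_def by (cases "c = y") auto
    moreover have "Hb \<beta> y \<le> lb \<beta>" "y = Gb \<beta> (Hb \<beta> y)" using H_prop[OF b] y by auto
    ultimately show "y \<in> Gb \<beta> ` {e..lb \<beta>}" by auto
  qed
  ultimately show ?thesis using continuous_on_subset by blast
qed

lemma K_cont: assumes b: "\<beta> > 2" and c: "c \<le> gb \<beta>" shows "continuous_on {c..gb \<beta>} (Kb \<beta>)"
proof -
  define e where "e = Kb \<beta> c"
  have l0: "0 < lb \<beta>" using lb_facts[OF b] by simp
  have "continuous_on (Gb \<beta> ` {lb \<beta>..e}) (Kb \<beta>)"
    by (rule continuous_on_inv[OF G_cont[OF l0]]) (use K_eq[OF b] in auto)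
  moreover have "{c..gb \<beta>} \<subseteq> Gb \<beta> ` {lb \<beta>..e}"
  proof
    fix y assume y: "y \<in> {c..gb \<beta>}"
    have "Kb \<beta> y \<le> e" using K_mono[OF b, of c y] y e_def by (cases "c = y") auto
    moreover have "lb \<beta> \<le> Kb \<beta> y" "y = Gb \<beta> (Kb \<beta> y)" using K_prop[OF b] y by auto
    ultimately show "y \<in> Gb \<beta> ` {lb \<beta>..e}" by auto
  qed
  ultimately show ?thesis using continuous_on_subset by blast
qed

definition sfun :: "real \<Rightarrow> real" where "sfun x = (x+1) * ln x / (x - 1)"

lemma ln_gt: "1 < (x::real) \<Longrightarrow> ln x > 1 - 1/x"
proof -
  assume x: "1 < x"
  have "ln 1 - ln x < (1 - x)/x" using x ln_diff_less[of 1 x] by simp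
  moreover have "(1-x)/x = 1/x - 1" using x by (simp add: field_simps)
  ultimately show ?thesis by simp
qed

lemma sfun_gt2: assumes "1 < x" shows "sfun x > 2"
proof -
  let ?v = "\<lambda>x. (x+1) * ln x - 2*(x-1)"
  have "?v 1 < ?v x"
  proof (rule DERIV_pos_imp_increasing_open[OF assms])
    fix t :: real assume t: "1 < t" "t < x"
    have "DERIV ?v t :> ln t + (t+1)/t - 2" using t
      by (auto intro!: derivative_eq_intros)
    moreover have "ln t + (t+1)/t - 2 > 0" using ln_gt[of t] t by (simp add: field_simps)
    ultimately show "\<exists>y. DERIV ?v t :> y \<and> y > 0" by blast
  next
    show "continuous_on {1..x} ?v" by (intro continuous_intros) auto
  qed
  hence "(x+1) * ln x > 2*(x-1)" by simp
  thus ?thesis using assms unfolding sfun_def by (simp add: field_simps)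
qed

lemma w_pos: assumes "1 < (x::real)" shows "x - 1/x - 2*ln x > 0"
proof -
  let ?w = "\<lambda>x. x - 1/x - 2*ln x"
  have "?w 1 < ?w x"
  proof (rule DERIV_pos_imp_increasing_open[OF assms])
    fix t :: real assume t: "1 < t" "t < x"
    have "DERIV ?w t :> 1 + 1/t^2 - 2/t" using t
      by (auto intro!: derivative_eq_intros simp: power2_eq_square field_simps)
    moreover have "1 + 1/t^2 - 2/t = (1 - 1/t)^2" using t by (simp add: power2_eq_square field_simps)
    moreover have "(1 - 1/t)^2 > 0" using t by simp
    ultimately show "\<exists>y. DERIV ?w t :> y \<and> y > 0" by metis
  next
    show "continuous_on {1..x} ?w" by (intro continuous_intros) auto
  qed
  thus ?thesis by simp
qed

lemma sfun_mono: assumes "1 < x" "x < x'" shows "sfun x < sfun x'"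
proof (rule DERIV_pos_imp_increasing[OF assms(2)])
  fix t assume t: "x \<le> t" "t \<le> x'"
  hence t1: "1 < t" using assms by simp
  have "DERIV sfun t :> ((ln t + (t+1)/t) * (t-1) - (t+1)*ln t)/(t-1)^2" unfolding sfun_def using t1
    by (auto intro!: derivative_eq_intros simp: power2_eq_square)
  moreover have "((ln t + (t+1)/t) * (t-1) - (t+1)*ln t)/(t-1)^2 = (t - 1/t - 2*ln t)/(t-1)^2"
    using t1 by (simp add: field_simps)
  moreover have "(t - 1/t - 2*ln t)/(t-1)^2 > 0" using w_pos[OF t1] t1 by simp
  ultimately show "\<exists>y. DERIV sfun t :> y \<and> y > 0" by metis
qed

lemma HK_g: assumes b: "\<beta> > 2" shows "Hb \<beta> (gb \<beta>) = lb \<beta>" "Kb \<beta> (gb \<beta>) = lb \<beta>"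
  using H_eq[OF b lb_facts(1)[OF b]] K_eq[OF b] unfolding gb_def by auto

lemma pair_rel: assumes b: "\<beta> > 2" and y: "y < gb \<beta>"
  shows "Hb \<beta> y < lb \<beta>" "lb \<beta> < Kb \<beta> y"
    "Kb \<beta> y + Hb \<beta> y = lb \<beta> * sfun (Kb \<beta> y / Hb \<beta> y)"
proof -
  have y': "y \<le> gb \<beta>" using y by simp
  define h where "h = Hb \<beta> y"
  define k where "k = Kb \<beta> y"
  note H = H_prop[OF b y', folded h_def] and K = K_prop[OF b y', folded k_def]
  note lf = lb_facts[OF b]
  show hl: "Hb \<beta> y < lb \<beta>" using H y unfolding h_def gb_def by (cases "Hb \<beta> y = lb \<beta>") auto
  show kl: "lb \<beta> < Kb \<beta> y" using K y unfolding k_def gb_def by (cases "Kb \<beta> y = lb \<beta>") auto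
  have eq: "ln k / \<beta> - 3/2 * k = ln h / \<beta> - 3/2*h" using H(3) K(2) unfolding Gb_def by simp
  have "ln k - ln h = (k - h) / lb \<beta>"
  proof -
    from eq have "(ln k - ln h)/\<beta> = 3/2*(k-h)" by (simp add: diff_divide_distrib algebra_simps)
    hence "ln k - ln h = 3/2*(k-h)*\<beta>" using b by (simp add: field_simps)
    thus ?thesis using b unfolding lb_def by (simp add: field_simps)
  qed
  moreover have "ln (k/h) = ln k - ln h" using H(1) K(1) lf by (simp add: ln_div)
  moreover have "h < k" using hl kl h_def k_def by simp
  ultimately have L: "ln (k/h) = (k-h)/lb \<beta>" and hk: "h < k" by auto
  have "sfun (k/h) = (k+h)*ln(k/h)/(k-h)" unfolding sfun_def using H(1) hk
    by (simp add: field_simps)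
  also have "\<dots> = (k+h)/lb \<beta>" unfolding L using hk lf by (simp add: field_simps)
  finally show "Kb \<beta> y + Hb \<beta> y = lb \<beta> * sfun (Kb \<beta> y / Hb \<beta> y)"
    unfolding h_def[symmetric] k_def[symmetric] using lf by simp
qed

lemma T_mono: assumes b: "\<beta> > 2" and "y < y'" "y' \<le> gb \<beta>"
  shows "Kb \<beta> y' + Hb \<beta> y' < Kb \<beta> y + Hb \<beta> y"
proof -
  have y: "y < gb \<beta>" using assms by simp
  note P = pair_rel[OF b y] and lf = lb_facts[OF b]
  have h0: "0 < Hb \<beta> y" using H_prop[OF b] y by simp
  have lam: "1 < Kb \<beta> y / Hb \<beta> y" using P h0 by simp
  show ?thesis
  proof (cases "y' = gb \<beta>")
    case True
    thus ?thesis using HK_g[OF b] P(3) sfun_gt2[OF lam] lf by simp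
  next
    case False
    hence y': "y' < gb \<beta>" using assms by simp
    note P' = pair_rel[OF b y']
    have h0': "0 < Hb \<beta> y'" using H_prop[OF b] y' by simp
    have lam': "1 < Kb \<beta> y' / Hb \<beta> y'" using P' h0' by simp
    have "Kb \<beta> y' / Hb \<beta> y' < Kb \<beta> y / Hb \<beta> y"
    proof -
      have "Kb \<beta> y' / Hb \<beta> y' < Kb \<beta> y / Hb \<beta> y'"
        using K_mono[OF b assms(2,3)] h0' by (simp add: divide_strict_right_mono)
      also have "\<dots> < Kb \<beta> y / Hb \<beta> y"
        using H_mono[OF b assms(2,3)] h0 P lf by (intro divide_strict_left_mono) auto
      finally show ?thesis .
    qed
    thus ?thesis using P(3) P'(3) sfun_mono[OF lam'] lf by simp
  qed
qed

lemma r1_pos: assumes b: "\<beta> > 2" shows "0 < r1 \<beta>"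
proof -
  define z where "z = 3*\<beta>/2 - 2"
  have z1: "1 < z" using b z_def by simp
  have "ln z < z - 1" using ln_diff_less[of z 1] z1 by simp
  hence "2/(3*\<beta>) * ln z < 2/(3*\<beta>) * (z - 1)" using b by (intro mult_strict_left_mono) auto
  moreover have "2/(3*\<beta>) * (z - 1) = 1 - 2/\<beta>" using b unfolding z_def by (simp add: field_simps)
  ultimately show ?thesis unfolding r1_def z_def[symmetric] by simp
qed

lemma r1_eq: assumes b: "\<beta> > 2" shows "gb \<beta> - Gb \<beta> (1 - 2*lb \<beta>) = 3/2 * r1 \<beta>"
proof -
  note lf = lb_facts[OF b]
  define z where "z = 3*\<beta>/2 - 2"
  have z1: "1 < z" using b z_def by simp
  have e: "1 - 2*lb \<beta> = lb \<beta> * z" unfolding z_def lb_def using b by (simp add: field_simps)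
  have "ln (1 - 2*lb \<beta>) = ln (lb \<beta>) + ln z" unfolding e using lf z1 by (simp add: ln_mult)
  hence "gb \<beta> - Gb \<beta> (1 - 2*lb \<beta>) = - ln z/\<beta> + 3/2*(1 - 2*lb \<beta>) - 3/2*lb \<beta>"
    unfolding gb_def Gb_def by (simp add: algebra_simps diff_divide_distrib add_divide_distrib)
  also have "\<dots> = 3/2 * r1 \<beta>" unfolding r1_def z_def[symmetric] using b unfolding lb_def
    by (simp add: field_simps)
  finally show ?thesis .
qed

definition Sfun :: "real \<Rightarrow> real \<Rightarrow> real \<Rightarrow> real" where
  "Sfun \<beta> r y = Kb \<beta> (y - 3*r/2) + Hb \<beta> y + Kb \<beta> y"

lemma S_mono: assumes b: "\<beta> > 2" and r: "0 \<le> r" and "y < y'" "y' \<le> gb \<beta>"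
  shows "Sfun \<beta> r y' < Sfun \<beta> r y"
proof -
  have "Kb \<beta> (y' - 3*r/2) < Kb \<beta> (y - 3*r/2)" using K_mono[OF b, of "y - 3*r/2" "y' - 3*r/2"] assms by simp
  thus ?thesis using T_mono[OF b assms(3,4)] unfolding Sfun_def by simp
qed

lemma y1_prop: assumes b: "\<beta> > 2" and r: "0 < r" "r < r1 \<beta>"
  shows "y1 \<beta> r \<le> gb \<beta>" "Sfun \<beta> r (y1 \<beta> r) = 1"
proof -
  note lf = lb_facts[OF b]
  define y0 where "y0 = Gb \<beta> 1"
  have y0g: "y0 \<le> gb \<beta>" unfolding y0_def by (rule G_le_g[OF b]) simp
  have K1: "Kb \<beta> y0 = 1" unfolding y0_def by (rule K_eq[OF b]) (use lf in simp)
  have "Sfun \<beta> r y0 > 1" unfolding Sfun_def K1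
    using H_prop(1)[OF b y0g] K_prop(1)[OF b, of "y0 - 3*r/2"] y0g r lf by simp
  moreover have "Sfun \<beta> r (gb \<beta>) < 1"
  proof -
    have ge: "lb \<beta> \<le> 1 - 2 * lb \<beta>" using lf by simp
    have gg: "gb \<beta> - 3*r/2 \<le> gb \<beta>" using r by simp
    have "Gb \<beta> (1 - 2*lb \<beta>) < gb \<beta> - 3*r/2" using r1_eq[OF b] r by simp
    moreover note KP = K_prop[OF b gg]
    ultimately have "Kb \<beta> (gb \<beta> - 3*r/2) < 1 - 2*lb \<beta>"
      using G_dec[OF b ge, of "Kb \<beta> (gb \<beta> - 3*r/2)"]
      by (metis linorder_not_less order_le_less order_less_asym)
    thus ?thesis unfolding Sfun_def HK_g[OF b] by simp
  qed
  moreover have "continuous_on {y0..gb \<beta>} (Sfun \<beta> r)"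
  proof -
    have c1: "continuous_on {y0..gb \<beta>} (\<lambda>y. Kb \<beta> (y - 3*r/2))"
      by (rule continuous_on_compose2[OF K_cont[OF b, of "y0 - 3*r/2"]])
         (use r y0g in \<open>auto intro!: continuous_intros\<close>)
    show ?thesis unfolding Sfun_def
      by (intro continuous_on_add c1 H_cont[OF b y0g] K_cont[OF b y0g])
  qed
  ultimately obtain y where y: "y0 \<le> y" "y \<le> gb \<beta>" "Sfun \<beta> r y = 1"
    using IVT2'[of "Sfun \<beta> r" "gb \<beta>" 1 y0] y0g by auto
  have ex: "\<exists>!y. y \<le> gb \<beta> \<and> Sfun \<beta> r y = 1"
  proof (rule ex1I[of _ y])
    show "y \<le> gb \<beta> \<and> Sfun \<beta> r y = 1" using y by simp
    fix y' assume y': "y' \<le> gb \<beta> \<and> Sfun \<beta> r y' = 1"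
    show "y' = y" using S_mono[OF b _, of r y y'] S_mono[OF b _, of r y' y] y y' r
      by (cases y y' rule: linorder_cases) auto
  qed
  have "y1 \<beta> r \<le> gb \<beta> \<and> Sfun \<beta> r (y1 \<beta> r) = 1"
    unfolding y1_def Sfun_def[symmetric] by (rule theI'[OF ex])
  thus "y1 \<beta> r \<le> gb \<beta>" "Sfun \<beta> r (y1 \<beta> r) = 1" by auto
qed

definition Lf :: "real \<Rightarrow> real" where "Lf t = ln ((1-2*t)/t)"
definition psi0 :: "real \<Rightarrow> real \<Rightarrow> real \<Rightarrow> real" where
  "psi0 \<beta> r t = 3/2*(1-r-3*t) - Lf t/\<beta>"
definition phiR :: "real \<Rightarrow> real \<Rightarrow> real \<Rightarrow> real" where
  "phiR \<beta> r t = PP \<beta> (1-2*t) + 2*PP \<beta> t + 3*r/2*(1-2*t)"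

lemma PP_deriv: "0 < x \<Longrightarrow> \<beta> \<noteq> 0 \<Longrightarrow> DERIV (PP \<beta>) x :> Gb \<beta> x + 1/\<beta>"
  unfolding PP_def Gb_def
  by (auto intro!: derivative_eq_intros simp: power2_eq_square field_simps)

lemma Lf_deriv: assumes "0 < t" "t < 1/2" shows "DERIV Lf t :> -1/(t*(1-2*t))"
proof -
  have "DERIV Lf t :> (-2*t - (1-2*t))/t^2 / ((1-2*t)/t)" unfolding Lf_def using assms
    by (auto intro!: derivative_eq_intros simp: power2_eq_square)
  moreover have "(-2*t - (1-2*t))/t^2 / ((1-2*t)/t) = -1/(t*(1-2*t))" using assms
    by (simp add: power2_eq_square field_simps)
  ultimately show ?thesis by simp
qed

lemma G_diff: assumes "0 < t" "t < 1/2" shows "Gb \<beta> t - Gb \<beta> (1-2*t) - 3*r/2 = psi0 \<beta> r t"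
proof -
  have "Lf t = ln (1-2*t) - ln t" unfolding Lf_def using assms by (simp add: ln_div)
  hence e1: "ln (1-2*t)/\<beta> = Lf t/\<beta> + ln t/\<beta>" by (simp add: add_divide_distrib[symmetric])
  have "(1/\<beta>)*ln t = ln t/\<beta>" "(1/\<beta>)*ln (1-2*t) = ln (1-2*t)/\<beta>" by simp_all
  note q = this
  show ?thesis unfolding psi0_def Gb_def q e1 by (simp add: algebra_simps add_divide_distrib diff_divide_distrib)
qed

lemma phiR_deriv: assumes "0 < t" "t < 1/2" "\<beta> \<noteq> 0" shows "DERIV (phiR \<beta> r) t :> 2 * psi0 \<beta> r t"
proof -
  have a: "0 < 1 - 2*t" using assms by simp
  have d0: "DERIV (\<lambda>t. 1 - 2*t) t :> -2" by (auto intro!: derivative_eq_intros)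
  have d1: "DERIV (\<lambda>t. PP \<beta> (1-2*t)) t :> (Gb \<beta> (1-2*t) + 1/\<beta>) * (- 2)"
    by (rule DERIV_chain2[OF PP_deriv[OF a assms(3)] d0])
  have d2: "DERIV (\<lambda>t. 2 * PP \<beta> t) t :> 2*(Gb \<beta> t + 1/\<beta>)"
    by (rule DERIV_cmult[OF PP_deriv[OF assms(1,3)]])
  have d3: "DERIV (\<lambda>t. 3*r/2*(1-2*t)) t :> 3*r/2*(-2)"
    by (rule DERIV_cmult[OF d0])
  have "DERIV (phiR \<beta> r) t :> (Gb \<beta> (1-2*t) + 1/\<beta>) * (- 2) + 2*(Gb \<beta> t + 1/\<beta>) + 3*r/2*(-2)"
    unfolding phiR_def by (intro DERIV_add d1 d2 d3)
  moreover have "(Gb \<beta> (1-2*t) + 1/\<beta>) * (- 2) + 2*(Gb \<beta> t + 1/\<beta>) + 3*r/2*(-2) = 2 * psi0 \<beta> r t"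
    using G_diff[OF assms(1,2), of \<beta> r] by simp
  ultimately show ?thesis by simp
qed

lemma phi_eq: assumes "0 < t" "t < 1/2"
  shows "Fbeta \<beta> (t,t) r = 1/4 - r/2 + ln 3/\<beta> + phiR \<beta> r t"
  using master[of t t \<beta> r] assms unfolding phiR_def by simp

lemma psi0_ffun: assumes "1 - r - 3*t \<noteq> 0" "\<beta> \<noteq> 0"
  shows "psi0 \<beta> r t = 3/2*(1-r-3*t)*(1 - ffun r t/\<beta>)"
proof -
  have "ffun r t * (1-r-3*t) = 2/3 * Lf t" unfolding ffun_def Lf_def using assms by (simp add: field_simps)
  thus ?thesis unfolding psi0_def using assms by (simp add: field_simps)
qed



lemma h_deriv: assumes "0 < t" "t < 1/2" shows "DERIV hfun t :> -3*(1-4*t)*Lf t"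
proof -
  have e: "hfun = (\<lambda>t. - 3 * t * (1 - 2*t) * Lf t - 3 * t + 1)" unfolding hfun_def Lf_def by auto
  have da: "DERIV (\<lambda>t. - 3 * t * (1 - 2*t)) t :> -3*(1-4*t)"
    by (auto intro!: derivative_eq_intros simp: algebra_simps)
  have db: "DERIV (\<lambda>t. - 3 * t * (1 - 2*t) * Lf t) t :> -3*(1-4*t) * Lf t + (-1/(t*(1-2*t))) * (- 3 * t * (1 - 2*t))"
    by (rule DERIV_mult[OF da Lf_deriv[OF assms]])
  have dc: "DERIV (\<lambda>t. 3 * t) t :> 3" by (auto intro!: derivative_eq_intros)
  have "DERIV hfun t :> (-3*(1-4*t) * Lf t + (-1/(t*(1-2*t))) * (- 3 * t * (1 - 2*t)) - 3) + 0"
    unfolding e by (intro DERIV_add DERIV_diff db dc DERIV_const)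
  moreover have "(-3*(1-4*t) * Lf t + (-1/(t*(1-2*t))) * (- 3 * t * (1 - 2*t)) - 3) + 0
     = -3*(1-4*t)*Lf t" using assms by (simp add: field_simps)
  ultimately show ?thesis by simp
qed

lemma ffun_deriv: assumes "0 < t" "t < 1/2" "1 - r - 3*t \<noteq> 0"
  shows "DERIV (ffun r) t :> 2/(3*(1-r-3*t)^2) * (r - hfun t)/(t*(1-2*t))"
proof -
  let ?D = "1 - r - 3*t"
  have e: "ffun r = (\<lambda>t. 2 / (3 * (1 - r - 3*t)) * Lf t)" unfolding ffun_def Lf_def by auto
  have da: "DERIV (\<lambda>t. 2 / (3 * (1 - r - 3*t))) t :> 2/?D^2"
    using assms apply (auto intro!: derivative_eq_intros)
    apply (simp add: divide_simps)
    apply algebra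
    done
  have "DERIV (ffun r) t :> 2/?D^2 * Lf t + (-1/(t*(1-2*t))) * (2 / (3 * ?D))"
    unfolding e by (rule DERIV_mult[OF da Lf_deriv[OF assms(1,2)]])
  moreover have "2/?D^2 * Lf t + (-1/(t*(1-2*t))) * (2 / (3 * ?D))
      = 2/(3*?D^2) * (r - hfun t)/(t*(1-2*t))"
  proof -
    have rh: "r - hfun t = 3*(t*(1-2*t))*Lf t - ?D" unfolding hfun_def Lf_def by (simp add: algebra_simps)
    have gen: "\<And>D P L::real. D \<noteq> 0 \<Longrightarrow> P \<noteq> 0 \<Longrightarrow>
       2/D^2*L + (-1/P)*(2/(3*D)) = 2/(3*D^2)*(3*P*L - D)/P"
      by (simp add: field_simps power2_eq_square)
    have "t*(1-2*t) \<noteq> 0" using assms by simp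
    thus ?thesis unfolding rh using gen[OF assms(3)] by simp
  qed
  ultimately show ?thesis by simp
qed


lemma Lf_pos: "0 < t \<Longrightarrow> t < 1/3 \<Longrightarrow> Lf t > 0"
  unfolding Lf_def by (subst ln_gt_zero_iff) (auto simp: field_simps)

lemma Lf_neg: "1/3 < t \<Longrightarrow> t < 1/2 \<Longrightarrow> Lf t < 0"
  unfolding Lf_def by (subst ln_less_zero_iff) (auto simp: field_simps)

lemma Lf_third: "Lf (1/3) = 0" unfolding Lf_def by simp

lemma Lf_dec: assumes "0 < t" "t < t'" "t' < 1/2" shows "Lf t' < Lf t"
proof (rule DERIV_neg_imp_decreasing[OF assms(2)])
  fix x assume "t \<le> x" "x \<le> t'"
  hence x: "0 < x" "x < 1/2" using assms by auto
  show "\<exists>y. DERIV Lf x :> y \<and> y < 0" using Lf_deriv[OF x] x by (intro exI conjI) (auto simp: divide_neg_pos)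
qed

lemma h_cont: assumes "0 < a" "b < 1/2" shows "continuous_on {a..b} hfun"
proof (rule DERIV_atLeastAtMost_imp_continuous_on)
  fix x assume "a \<le> x" "x \<le> b"
  hence "0 < x" "x < 1/2" using assms by auto
  thus "\<exists>y. DERIV hfun x :> y" using h_deriv by blast
qed

lemma ffun_cont: assumes "0 < a" "b < 1/2" "\<And>t. a \<le> t \<Longrightarrow> t \<le> b \<Longrightarrow> 1 - r - 3*t \<noteq> 0"
  shows "continuous_on {a..b} (ffun r)"
proof (rule DERIV_atLeastAtMost_imp_continuous_on)
  fix x assume x: "a \<le> x" "x \<le> b"
  hence "0 < x" "x < 1/2" using assms by auto
  thus "\<exists>y. DERIV (ffun r) x :> y" using ffun_deriv assms(3)[OF x] by blast
qed

lemma h_third: "hfun (1/3) = 0" unfolding hfun_def by simp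

lemma h_neg_hi: assumes "1/3 < t" "t < 1/2" shows "hfun t < 0"
proof -
  have "hfun t < hfun (1/3)"
  proof (rule DERIV_neg_imp_decreasing_open[OF assms(1)])
    fix x assume x: "1/3 < x" "x < t"
    hence x': "0 < x" "x < 1/2" using assms by auto
    have "Lf x < 0" using Lf_neg x assms by auto
    moreover have "1 - 4*x < 0" using x by simp
    ultimately have "-3*(1-4*x)*Lf x < 0" by (simp add: mult_neg_neg mult_pos_neg)
    thus "\<exists>y. DERIV hfun x :> y \<and> y < 0" using h_deriv[OF x'] by blast
  qed (rule h_cont, use assms in auto)
  thus ?thesis using h_third by simp
qed

lemma h_neg_mid: assumes "1/4 \<le> t" "t < 1/3" shows "hfun t < 0"
proof -
  have "hfun t < hfun (1/3)"
  proof (rule DERIV_pos_imp_increasing_open[OF assms(2)])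
    fix x assume x: "t < x" "x < 1/3"
    hence x': "0 < x" "x < 1/2" using assms by auto
    have "Lf x > 0" using Lf_pos x x' by auto
    moreover have "1 - 4*x < 0" using x assms by simp
    ultimately have "-3*(1-4*x)*Lf x > 0" by (simp add: mult_pos_neg)
    thus "\<exists>y. DERIV hfun x :> y \<and> y > 0" using h_deriv[OF x'] by blast
  qed (rule h_cont, use assms in auto)
  thus ?thesis using h_third by simp
qed

lemma h_dec_lo: assumes "0 < t" "t < t'" "t' \<le> 1/4" shows "hfun t' < hfun t"
proof (rule DERIV_neg_imp_decreasing_open[OF assms(2)])
  fix x assume x: "t < x" "x < t'"
  hence x': "0 < x" "x < 1/2" using assms by auto
  have "Lf x > 0" using Lf_pos x x' assms by auto
  moreover have "1 - 4*x > 0" using x assms by simp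
  ultimately have "(1-4*x)*Lf x > 0" by simp
  hence "-3*(1-4*x)*Lf x < 0" by (simp only: mult.assoc[of "-3"])
  thus "\<exists>y. DERIV hfun x :> y \<and> y < 0" using h_deriv[OF x'] by blast
qed (rule h_cont, use assms in auto)


lemma Lf_cont: assumes "0 < a" "b < 1/2" shows "continuous_on {a..b} Lf"
proof (rule DERIV_atLeastAtMost_imp_continuous_on)
  fix x assume "a \<le> x" "x \<le> b"
  hence "0 < x" "x < 1/2" using assms by auto
  thus "\<exists>y. DERIV Lf x :> y" using Lf_deriv by blast
qed

lemma phiR_cont: assumes "0 < a" "b < 1/2" "\<beta> \<noteq> 0" shows "continuous_on {a..b} (phiR \<beta> r)"
proof (rule DERIV_atLeastAtMost_imp_continuous_on)
  fix x assume "a \<le> x" "x \<le> b"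
  hence "0 < x" "x < 1/2" using assms by auto
  thus "\<exists>y. DERIV (phiR \<beta> r) x :> y" using phiR_deriv assms(3) by blast
qed

lemma f_inc_hi: assumes r: "0 < r" and "1/3 < t" "t < t'" "t' < 1/2" shows "ffun r t < ffun r t'"
proof (rule DERIV_pos_imp_increasing[OF assms(3)])
  fix x assume "t \<le> x" "x \<le> t'"
  hence x: "0 < x" "x < 1/2" "1/3 < x" using assms by auto
  have D: "1 - r - 3*x \<noteq> 0" using x r by simp
  have "r - hfun x > 0" using h_neg_hi[OF x(3,2)] r by simp
  moreover have "x*(1-2*x) > 0" using x by simp
  moreover have "2/(3*(1-r-3*x)^2) > 0" using D by simp
  ultimately have "2/(3*(1-r-3*x)^2) * (r - hfun x)/(x*(1-2*x)) > 0" by simp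
  thus "\<exists>y. DERIV (ffun r) x :> y \<and> y > 0" using ffun_deriv[OF x(1,2) D] by blast
qed

lemma q_prop: assumes b: "\<beta> > 2" and r: "0 < r"
  shows "1/3 < qb \<beta> r" "qb \<beta> r < 1/2" "ffun r (qb \<beta> r) = \<beta>"
proof -
  define M where "M = \<beta> * (3/4 + 3*r/2 + 1)"
  define E where "E = exp (-M)"
  define t1 where "t1 = 1/(2 + E)"
  have e0: "0 < E" "E < 1" using b r unfolding M_def E_def by auto
  have t1: "1/3 < t1" "t1 < 1/2" unfolding t1_def using e0 by (auto simp: field_simps)
  have "(1 - 2*t1)/t1 = E" unfolding t1_def using e0 by (simp add: field_simps)
  hence "(1 - 2*t1)/t1 = exp (-M)" unfolding E_def .
  hence Lt1: "Lf t1 = -M" unfolding Lf_def by simp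
  have "psi0 \<beta> r t1 = 3/2*(1-r-3*t1) + M/\<beta>" unfolding psi0_def Lt1 by simp
  also have "M/\<beta> = 3/4 + 3*r/2 + 1" unfolding M_def using b by simp
  finally have p1: "psi0 \<beta> r t1 > 0" using t1 by (simp add: field_simps)
  have p0: "psi0 \<beta> r (1/3) < 0" unfolding psi0_def Lf_third using r by simp
  have "continuous_on {1/3..t1} (psi0 \<beta> r)" unfolding psi0_def
    by (intro continuous_intros Lf_cont) (use t1 b in auto)
  then obtain t where t: "1/3 \<le> t" "t \<le> t1" "psi0 \<beta> r t = 0"
    using IVT'[of "psi0 \<beta> r" "1/3" 0 t1] p0 p1 t1 by auto
  have "t \<noteq> 1/3" using t(3) p0 by (metis less_irrefl)
  hence t': "1/3 < t" "t < 1/2" using t t1 by auto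
  have D: "1 - r - 3*t \<noteq> 0" using t' r by simp
  have "3/2*(1-r-3*t)*(1 - ffun r t/\<beta>) = 0" using psi0_ffun[OF D, of \<beta>] t(3) b by simp
  hence "1 - ffun r t/\<beta> = 0" using D by simp
  hence "ffun r t = \<beta>" using b by (simp add: field_simps)
  have ex: "\<exists>!t. 1/3 < t \<and> t < 1/2 \<and> ffun r t = \<beta>"
  proof (rule ex1I[of _ t])
    show "1/3 < t \<and> t < 1/2 \<and> ffun r t = \<beta>" using t' \<open>ffun r t = \<beta>\<close> by simp
    fix t' assume "1/3 < t' \<and> t' < 1/2 \<and> ffun r t' = \<beta>"
    thus "t' = t" using f_inc_hi[OF r, of t t'] f_inc_hi[OF r, of t' t] t' \<open>ffun r t = \<beta>\<close>
      by (cases t t' rule: linorder_cases) auto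
  qed
  have "1/3 < qb \<beta> r \<and> qb \<beta> r < 1/2 \<and> ffun r (qb \<beta> r) = \<beta>"
    unfolding qb_def by (rule theI'[OF ex])
  thus "1/3 < qb \<beta> r" "qb \<beta> r < 1/2" "ffun r (qb \<beta> r) = \<beta>" by auto
qed

lemma psi0_sign_hi: assumes b: "\<beta> > 2" and r: "0 < r" and t: "1/3 < t" "t < 1/2"
  shows "t < qb \<beta> r \<Longrightarrow> psi0 \<beta> r t < 0" "qb \<beta> r < t \<Longrightarrow> psi0 \<beta> r t > 0"
proof -
  note Q = q_prop[OF b r]
  have D: "1 - r - 3*t < 0" using t r by simp
  have eq: "psi0 \<beta> r t = 3/2*(1-r-3*t)*(1 - ffun r t/\<beta>)" using psi0_ffun[of r t \<beta>] D b by simp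
  show "t < qb \<beta> r \<Longrightarrow> psi0 \<beta> r t < 0"
  proof -
    assume "t < qb \<beta> r"
    hence "ffun r t < \<beta>" using f_inc_hi[OF r t(1) _ Q(2)] Q by simp
    hence "1 - ffun r t/\<beta> > 0" using b by (simp add: field_simps)
    thus ?thesis unfolding eq using D by (simp add: mult_neg_pos)
  qed
  show "qb \<beta> r < t \<Longrightarrow> psi0 \<beta> r t > 0"
  proof -
    assume "qb \<beta> r < t"
    hence "ffun r t > \<beta>" using f_inc_hi[OF r Q(1) _ t(2)] Q by simp
    hence "1 - ffun r t/\<beta> < 0" using b by (simp add: field_simps)
    thus ?thesis unfolding eq using D by (simp add: mult_neg_neg)
  qed
qed

lemma phiR_min: assumes b: "\<beta> > 2" and r: "0 < r" and t: "1/3 < t" "t < 1/2"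
  shows "phiR \<beta> r (qb \<beta> r) \<le> phiR \<beta> r t"
proof (cases "t \<le> qb \<beta> r")
  case True
  show ?thesis
  proof (rule DERIV_nonpos_imp_decreasing_open[OF True])
    fix x assume x: "t < x" "x < qb \<beta> r"
    hence x': "0 < x" "x < 1/2" "1/3 < x" using t q_prop[OF b r] by auto
    have "psi0 \<beta> r x < 0" using psi0_sign_hi(1)[OF b r x'(3,2) x(2)] .
    thus "\<exists>y. DERIV (phiR \<beta> r) x :> y \<and> y \<le> 0" using phiR_deriv[OF x'(1,2), of \<beta> r] b by fastforce
  qed (rule phiR_cont, use t q_prop[OF b r] b in auto)
next
  case False
  hence F: "qb \<beta> r \<le> t" by simp
  show ?thesis
  proof (rule DERIV_nonneg_imp_increasing_open[OF F])
    fix x assume x: "qb \<beta> r < x" "x < t"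
    hence x': "0 < x" "x < 1/2" "1/3 < x" using t q_prop[OF b r] by auto
    have "psi0 \<beta> r x > 0" using psi0_sign_hi(2)[OF b r x'(3,2) x(1)] .
    thus "\<exists>y. DERIV (phiR \<beta> r) x :> y \<and> y \<ge> 0" using phiR_deriv[OF x'(1,2), of \<beta> r] b by fastforce
  qed (rule phiR_cont, use t q_prop[OF b r] b in auto)
qed


lemma G_dec_le: assumes b: "\<beta> > 2" and "lb \<beta> \<le> x" "x \<le> x'" shows "Gb \<beta> x' \<le> Gb \<beta> x"
  using G_dec[OF b assms(2), of x'] assms by (cases "x = x'") auto

lemma E_deriv: assumes "0 < z" "z < w" "\<beta> \<noteq> 0"
  shows "DERIV (\<lambda>z. PP \<beta> z + PP \<beta> (w-z) + a*z) z :> Gb \<beta> z - Gb \<beta> (w-z) + a"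
proof -
  have w: "0 < w - z" using assms by simp
  have d0: "DERIV (\<lambda>z. w - z) z :> -1" by (auto intro!: derivative_eq_intros)
  have d1: "DERIV (\<lambda>z. PP \<beta> (w-z)) z :> (Gb \<beta> (w-z) + 1/\<beta>) * (-1)"
    by (rule DERIV_chain2[OF PP_deriv[OF w assms(3)] d0])
  have d3: "DERIV (\<lambda>z. a*z) z :> a" by (auto intro!: derivative_eq_intros)
  have "DERIV (\<lambda>z. PP \<beta> z + PP \<beta> (w-z) + a*z) z :> (Gb \<beta> z + 1/\<beta>) + (Gb \<beta> (w-z) + 1/\<beta>) * (-1) + a"
    by (intro DERIV_add d1 d3 PP_deriv[OF assms(1,3)])
  thus ?thesis by simp
qed

lemma E_cont: assumes "0 < c" "d < w" "\<beta> \<noteq> 0"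
  shows "continuous_on {c..d} (\<lambda>z. PP \<beta> z + PP \<beta> (w-z) + a*z)"
proof (rule DERIV_atLeastAtMost_imp_continuous_on)
  fix x assume "c \<le> x" "x \<le> d"
  hence "0 < x" "x < w" using assms by auto
  thus "\<exists>y. DERIV (\<lambda>z. PP \<beta> z + PP \<beta> (w-z) + a*z) x :> y" using E_deriv assms(3) by blast
qed

lemma case1: assumes b: "\<beta> > 2" and r: "0 < r" "r < r1 \<beta>"
  shows "Fbeta \<beta> (sigma0 \<beta> r) r < Fbeta \<beta> (sigma1 \<beta> r) r"
proof -
  note lf = lb_facts[OF b]
  define y where "y = y1 \<beta> r"
  define a where "a = 3*r/2"
  have yg: "y \<le> gb \<beta>" and S: "Sfun \<beta> r y = 1" using y1_prop[OF b r] y_def by auto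
  have yag: "y - a \<le> gb \<beta>" using yg r a_def by simp
  define hh where "hh = Hb \<beta> y"
  define k1 where "k1 = Kb \<beta> y"
  define k0 where "k0 = Kb \<beta> (y - a)"
  note HP = H_prop[OF b yg, folded hh_def] and KP1 = K_prop[OF b yg, folded k1_def]
   and KP0 = K_prop[OF b yag, folded k0_def]
  have sum: "k0 + hh + k1 = 1" using S unfolding Sfun_def k0_def hh_def k1_def a_def by simp
  define w where "w = 1 - hh"
  define t0 where "t0 = (1 - hh)/2"
  have t0: "1/3 < t0" "t0 < 1/2" "lb \<beta> \<le> t0" "hh < t0" using HP lf unfolding t0_def by auto
  have k0p: "0 < k0" "0 < k1" using KP0 KP1 lf by auto
  define E where "E = (\<lambda>z. PP \<beta> z + PP \<beta> (w-z) + a*z)"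
  have bn: "\<beta> \<noteq> 0" using b by simp
  have Fs1: "Fbeta \<beta> (sigma1 \<beta> r) r = 1/4 - r/2 + ln 3/\<beta> + PP \<beta> hh + E k0"
  proof -
    have "sigma1 \<beta> r = (k1, hh)" unfolding sigma1_def y_def[symmetric] k1_def hh_def ..
    moreover have "1 - k1 - hh = k0" "w - k0 = k1" using sum w_def by auto
    ultimately show ?thesis unfolding E_def a_def using master[of k1 hh \<beta> r] k0p HP by simp
  qed
  have Fp: "Fbeta \<beta> (t0, hh) r = 1/4 - r/2 + ln 3/\<beta> + PP \<beta> hh + E t0"
  proof -
    have e1: "1 - t0 - hh = t0" and e2: "w - t0 = t0" unfolding t0_def w_def by (auto simp: field_simps)
    show ?thesis unfolding E_def a_def e2 using master[of t0 hh \<beta> r, unfolded e1] t0 HP by simp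
  qed
  have Ft: "Fbeta \<beta> (t0, hh) r = Fbeta \<beta> (t0,t0) r + a*(t0 - hh)"
  proof -
    have e1: "1 - t0 - hh = t0" and ht: "1 - 2*t0 = hh" unfolding t0_def by (auto simp: field_simps)
    have A: "Fbeta \<beta> (t0,t0) r = 1/4 - r/2 + ln 3/\<beta> + PP \<beta> hh + 2*PP \<beta> t0 + 3*r/2*hh"
      using phi_eq[of t0 \<beta> r] t0 unfolding phiR_def ht by simp
    have B: "Fbeta \<beta> (t0,hh) r = 1/4 - r/2 + ln 3/\<beta> + PP \<beta> t0 + PP \<beta> t0 + PP \<beta> hh + 3*r/2*t0"
      using master[of t0 hh \<beta> r, unfolded e1] t0 HP by simp
    show ?thesis unfolding A B a_def by (simp add: field_simps)
  qed
  have wk: "w = k0 + k1" using sum w_def by simp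
  have wt: "w = 2*t0" unfolding w_def t0_def by simp
  have "E t0 \<le> E k0"
  proof (cases "t0 \<le> k0")
    case True
    show ?thesis unfolding E_def
    proof (rule DERIV_nonneg_imp_increasing_open[OF True])
      fix z assume z: "t0 < z" "z < k0"
      have zp: "0 < z" "z < w" using z t0 lf wk k0p by auto
      have "Gb \<beta> k0 \<le> Gb \<beta> z" using G_dec_le[OF b, of z k0] z t0 by simp
      moreover have "Gb \<beta> (w-z) \<le> Gb \<beta> k1" using G_dec_le[OF b, of k1 "w-z"] z wk KP1 by simp
      ultimately have "Gb \<beta> z - Gb \<beta> (w-z) + a \<ge> 0" using KP0 KP1 by simp
      thus "\<exists>y. DERIV (\<lambda>z. PP \<beta> z + PP \<beta> (w-z) + a*z) z :> y \<and> y \<ge> 0"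
        using E_deriv[OF zp bn, of a] by blast
    qed (rule E_cont, use t0 lf wk wt k0p bn in auto)
  next
    case False
    hence F: "k0 \<le> t0" by simp
    show ?thesis unfolding E_def
    proof (rule DERIV_nonpos_imp_decreasing_open[OF F])
      fix z assume z: "k0 < z" "z < t0"
      have zp: "0 < z" "z < w" using z t0 lf wk k0p unfolding w_def t0_def by auto
      have "Gb \<beta> z \<le> Gb \<beta> k0" using G_dec_le[OF b, of k0 z] z KP0 by simp
      moreover have "Gb \<beta> k1 \<le> Gb \<beta> (w-z)" using G_dec_le[OF b, of "w-z" k1] z wk t0 unfolding w_def t0_def by simp
      ultimately have "Gb \<beta> z - Gb \<beta> (w-z) + a \<le> 0" using KP0 KP1 by simp
      thus "\<exists>y. DERIV (\<lambda>z. PP \<beta> z + PP \<beta> (w-z) + a*z) z :> y \<and> y \<le> 0"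
        using E_deriv[OF zp bn, of a] by blast
    qed (rule E_cont, use t0 lf wk wt k0p bn in auto)
  qed
  hence "Fbeta \<beta> (t0, hh) r \<le> Fbeta \<beta> (sigma1 \<beta> r) r" using Fs1 Fp by simp
  moreover have "a*(t0 - hh) > 0" using t0 r a_def by simp
  moreover have "Fbeta \<beta> (sigma0 \<beta> r) r \<le> Fbeta \<beta> (t0,t0) r"
  proof -
    note Q = q_prop[OF b r(1)]
    have "Fbeta \<beta> (sigma0 \<beta> r) r = 1/4 - r/2 + ln 3/\<beta> + phiR \<beta> r (qb \<beta> r)"
      unfolding sigma0_def using phi_eq Q by simp
    moreover have "Fbeta \<beta> (t0,t0) r = 1/4 - r/2 + ln 3/\<beta> + phiR \<beta> r t0"
      using phi_eq t0 by simp
    ultimately show ?thesis using phiR_min[OF b r(1) t0(1,2)] by simp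
  qed
  ultimately show ?thesis using Ft by simp
qed


lemma kr_facts: "0 < r \<Longrightarrow> r < 1 \<Longrightarrow> 0 < kr r \<and> kr r < 1/3 \<and> 1 - r - 3 * kr r = 0"
  unfolding kr_def by auto

lemma h_at_kr: assumes "0 < r" "r < 1" shows "hfun (kr r) < r"
proof -
  note k = kr_facts[OF assms]
  have "Lf (kr r) > 0" using Lf_pos k by auto
  hence "3 * kr r * (1 - 2 * kr r) * Lf (kr r) > 0" using k by (intro mult_pos_pos) auto
  moreover have "hfun (kr r) = r - 3 * kr r * (1 - 2 * kr r) * Lf (kr r)"
    unfolding hfun_def Lf_def using k by (simp add: algebra_simps)
  ultimately show ?thesis by simp
qed


lemma h_near0: assumes "0 < r" "r < 1" shows "\<exists>e. 0 < e \<and> e < kr r \<and> r < hfun e"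
proof -
  define s where "s = (1-r)/12"
  define e where "e = s^2"
  have s: "0 < s" "s \<le> 1/12" using assms s_def by auto
  have e: "0 < e" "e \<le> s/12" unfolding e_def using s by (auto simp: power2_eq_square intro: mult_left_mono)
  have ek: "e < kr r" using e s unfolding kr_def s_def by simp
  have "ln (1/s) \<le> 1/s - 1" using s by (intro ln_le_minus_one) auto
  hence ls: "- ln s \<le> 1/s - 1" using s by (simp add: ln_div)
  have le: "ln e = 2 * ln s" unfolding e_def using s by (simp add: ln_realpow)
  have "(1-2*e)/e \<le> 1/e" using e by (simp add: divide_right_mono)
  hence "Lf e \<le> ln (1/e)" unfolding Lf_def using e s
    by (subst ln_le_cancel_iff) (auto simp: field_simps)
  also have "ln (1/e) = -2 * ln s" using e le by (simp add: ln_div)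
  finally have L1: "Lf e \<le> 2/s" using ls by simp
  have L0: "Lf e \<ge> 0" using Lf_pos[of e] e s by simp
  have "3 * e * (1 - 2*e) * Lf e \<le> 3 * e * Lf e"
    using e L0 s by (intro mult_right_mono) (auto simp: mult_left_mono)
  also have "\<dots> \<le> 3 * e * (2/s)" using L1 e by (intro mult_left_mono) auto
  also have "\<dots> = 6 * s" unfolding e_def using s by (simp add: power2_eq_square)
  finally have "3 * e * (1 - 2*e) * Lf e \<le> 6 * s" .
  moreover have "hfun e = 1 - 3*e - 3 * e * (1 - 2*e) * Lf e" unfolding hfun_def Lf_def by simp
  ultimately have "hfun e \<ge> 1 - 3*e - 6*s" by simp
  moreover have "1 - 3*e - 6*s > r" using e s s_def by simp
  ultimately show ?thesis using e ek by (intro exI[of _ e]) auto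
qed


lemma m0_unique: assumes "0 < r" "r < 1" "0 < t" "t < kr r" "hfun t = r" "0 < t'" "t' < kr r" "hfun t' = r"
  shows "t = t'"
proof -
  note k = kr_facts[OF assms(1,2)]
  have "t < 1/4"
  proof (rule ccontr)
    assume "\<not> t < 1/4" thus False using h_neg_mid[of t] assms k by simp
  qed
  moreover have "t' < 1/4"
  proof (rule ccontr)
    assume "\<not> t' < 1/4" thus False using h_neg_mid[of t'] assms k by simp
  qed
  ultimately show ?thesis using h_dec_lo[of t t'] h_dec_lo[of t' t] assms
    by (cases t t' rule: linorder_cases) auto
qed


lemma m0_prop: assumes "0 < r" "r < 1"
  shows "0 < m0 r" "m0 r < kr r" "hfun (m0 r) = r" "m0 r < 1/4"
proof -
  note k = kr_facts[OF assms]
  obtain e where e: "0 < e" "e < kr r" "r < hfun e" using h_near0[OF assms] by blast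
  obtain t where t: "e \<le> t" "t \<le> kr r" "hfun t = r"
    using IVT2'[of hfun "kr r" r e] e h_at_kr[OF assms] h_cont[of e "kr r"] k by auto
  have "t \<noteq> kr r" using t h_at_kr[OF assms] by auto
  hence t': "0 < t" "t < kr r" using t e by auto
  have ex: "\<exists>!t. 0 < t \<and> t < kr r \<and> hfun t = r"
    using t t' m0_unique[OF assms] by (intro ex1I[of _ t]) auto
  have P: "0 < m0 r \<and> m0 r < kr r \<and> hfun (m0 r) = r" unfolding m0_def by (rule theI'[OF ex])
  thus "0 < m0 r" "m0 r < kr r" "hfun (m0 r) = r" by auto
  show "m0 r < 1/4"
  proof (rule ccontr)
    assume "\<not> m0 r < 1/4" thus False using h_neg_mid[of "m0 r"] P assms k by simp
  qed
qed


lemma m0_eq: assumes "0 < r" "r < 1" "0 < t" "t < kr r" "hfun t = r" shows "m0 r = t"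
proof -
  note M = m0_prop[OF assms(1,2)]
  show ?thesis by (rule m0_unique[OF assms(1,2) M(1) M(2) M(3) assms(3) assms(4) assms(5)])
qed


lemma h_vs_r: assumes "0 < r" "r < 1"
  shows "\<And>t. 0 < t \<Longrightarrow> t < m0 r \<Longrightarrow> hfun t > r"
    "\<And>t. m0 r < t \<Longrightarrow> t < kr r \<Longrightarrow> hfun t < r"
proof -
  note M = m0_prop[OF assms] and k = kr_facts[OF assms]
  fix t assume "0 < t" "t < m0 r"
  thus "hfun t > r" using h_dec_lo[of t "m0 r"] M by simp
next
  note M = m0_prop[OF assms] and k = kr_facts[OF assms]
  fix t assume t: "m0 r < t" "t < kr r"
  show "hfun t < r"
  proof (cases "t \<le> 1/4")
    case True thus ?thesis using h_dec_lo[of "m0 r" t] M t by simp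
  next
    case False thus ?thesis using h_neg_mid[of t] t k assms by simp
  qed
qed



lemma f_dec_lo: assumes r: "0 < r" "r < 1" and t: "0 < t" "t < t'" "t' \<le> m0 r"
  shows "ffun r t' < ffun r t"
proof -
  note M = m0_prop[OF r] and k = kr_facts[OF r]
  show ?thesis
  proof (rule DERIV_neg_imp_decreasing_open[OF t(2)])
    fix x assume x: "t < x" "x < t'"
    have x': "0 < x" "x < 1/2" using x t M k by auto
    have D: "1 - r - 3*x > 0" using x t M unfolding kr_def by simp
    have "r - hfun x < 0" using h_vs_r(1)[OF r, of x] x' x t by simp
    moreover have "x*(1-2*x) > 0" using x' by simp
    moreover have "2/(3*(1-r-3*x)^2) > 0" using D by simp
    ultimately have "2/(3*(1-r-3*x)^2) * (r - hfun x)/(x*(1-2*x)) < 0"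
      by (simp add: mult_pos_neg divide_neg_pos)
    thus "\<exists>y. DERIV (ffun r) x :> y \<and> y < 0" using ffun_deriv[OF x' ] D by force
  next
    show "continuous_on {t..t'} (ffun r)"
      by (rule ffun_cont) (use t M k in \<open>auto simp: kr_def\<close>)
  qed
qed

lemma f_inc_lo: assumes r: "0 < r" "r < 1" and t: "m0 r \<le> t" "t < t'" "t' < kr r"
  shows "ffun r t < ffun r t'"
proof -
  note M = m0_prop[OF r] and k = kr_facts[OF r]
  show ?thesis
  proof (rule DERIV_pos_imp_increasing_open[OF t(2)])
    fix x assume x: "t < x" "x < t'"
    have x': "0 < x" "x < 1/2" using x t M k by auto
    have D: "1 - r - 3*x > 0" using x t unfolding kr_def by simp
    have "r - hfun x > 0" using h_vs_r(2)[OF r, of x] x t by simp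
    moreover have "x*(1-2*x) > 0" using x' by simp
    moreover have "2/(3*(1-r-3*x)^2) > 0" using D by simp
    ultimately have "2/(3*(1-r-3*x)^2) * (r - hfun x)/(x*(1-2*x)) > 0" by simp
    thus "\<exists>y. DERIV (ffun r) x :> y \<and> y > 0" using ffun_deriv[OF x' ] D by force
  next
    show "continuous_on {t..t'} (ffun r)"
      by (rule ffun_cont) (use t M k in \<open>auto simp: kr_def\<close>)
  qed
qed

lemma f_min: assumes r: "0 < r" "r < 1" and t: "0 < t" "t < kr r"
  shows "ffun r (m0 r) \<le> ffun r t"
  using f_dec_lo[OF r t(1), of "m0 r"] f_inc_lo[OF r _ _ t(2), of "m0 r"]
  by (cases t "m0 r" rule: linorder_cases) auto

lemma f_r_mono: assumes "0 < r" "r < r'" "r' < 1" "0 < t" "t < kr r'"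
  shows "ffun r t < ffun r' t"
proof -
  have L: "Lf t > 0" using Lf_pos assms unfolding kr_def by simp
  have D: "0 < 1 - r' - 3*t" using assms unfolding kr_def by simp
  have "2/(3*(1-r-3*t)) < 2/(3*(1-r'-3*t))" using D assms by (intro divide_strict_left_mono) auto
  hence "2/(3*(1-r-3*t)) * Lf t < 2/(3*(1-r'-3*t)) * Lf t" by (rule mult_strict_right_mono[OF _ L])
  thus ?thesis unfolding ffun_def Lf_def .
qed

lemma g_mono: assumes "0 < r" "r < r'" "r' < 1"
  shows "ffun r (m0 r) < ffun r' (m0 r')"
proof -
  have r1: "r < 1" using assms by simp
  note M' = m0_prop[of r'] 
  have "m0 r' < kr r" using M' assms unfolding kr_def by simp
  hence "ffun r (m0 r) \<le> ffun r (m0 r')" using f_min[OF assms(1) r1] M' assms by simp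
  also have "\<dots> < ffun r' (m0 r')" using f_r_mono[OF assms] M' assms by simp
  finally show ?thesis .
qed

lemma ln4: "ln 4 < (3/2::real)"
proof -
  have "1 + 1/2 + (1/2)^2/2 \<le> exp (1/2::real)" by (rule exp_lower_Taylor_quadratic) simp
  moreover have "(1/2::real)^2/2 = 1/8" by (simp add: power2_eq_square)
  ultimately have a: "13/8 \<le> exp (1/2::real)" by linarith
  have "(13/8::real)^3 \<le> exp (1/2::real) ^ 3" by (rule power_mono[OF a]) simp
  also have "exp (1/2::real) ^ 3 = exp (3/2)" by (simp add: exp_of_nat_mult[symmetric])
  finally have c: "(13/8)^3 \<le> exp (3/2::real)" .
  have "(4::real) < (13/8)^3" by (simp add: power3_eq_cube)
  hence "4 < exp (3/2::real)" using c by linarith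
  thus ?thesis by (metis exp_gt_zero ln_exp ln_less_cancel_iff zero_less_numeral)
qed

lemma r2_prop: assumes b: "\<beta> > 2" shows "0 < r2 \<beta>" "r2 \<beta> < 1" "ffun (r2 \<beta>) (m0 (r2 \<beta>)) = \<beta>"
proof -
  have "continuous_on {0..1/6} (\<lambda>t::real. t*(1-2*t))" by (intro continuous_intros)
  moreover have "(\<lambda>t::real. t*(1-2*t)) 0 \<le> 2/(9*\<beta>)" "2/(9*\<beta>) \<le> (\<lambda>t::real. t*(1-2*t)) (1/6)"
    using b by (auto simp: field_simps)
  ultimately obtain t0 where t0: "0 \<le> t0" "t0 \<le> 1/6" "t0*(1-2*t0) = 2/(9*\<beta>)"
    using IVT'[of "\<lambda>t::real. t*(1-2*t)" 0 "2/(9*\<beta>)" "1/6"] by auto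
  have t0p: "0 < t0" using t0 b by (cases "t0 = 0") auto
  have L: "Lf t0 > 0" using Lf_pos t0p t0 by simp
  define rs where "rs = hfun t0"
  have rs_eq: "rs = 1 - 3*t0 - 3*(t0*(1-2*t0))*Lf t0" unfolding rs_def hfun_def Lf_def by (simp add: algebra_simps)
  have h6: "hfun (1/6) > 0"
  proof -
    have "Lf (1/6) = ln 4" unfolding Lf_def by simp
    hence "hfun (1/6) = 1/2 - ln 4/3" unfolding hfun_def Lf_def[symmetric] by simp
    thus ?thesis using ln4 by simp
  qed
  have rs0: "0 < rs"
  proof (cases "t0 = 1/6")
    case True show ?thesis unfolding rs_def True using h6 .
  next
    case False thus ?thesis using h_dec_lo[of t0 "1/6"] t0p t0 h6 rs_def by simp
  qed
  have pos: "3*(t0*(1-2*t0))*Lf t0 > 0" using t0 b L by simp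
  have rs1: "rs < 1" using rs_eq pos t0p by simp
  have tk: "t0 < kr rs" unfolding kr_def using rs_eq pos by simp
  have m: "m0 rs = t0" using m0_eq[OF rs0 rs1 t0p tk] rs_def by simp
  have D: "1 - rs - 3*t0 = 3*(t0*(1-2*t0))*Lf t0" using rs_eq by simp
  have fv: "ffun rs t0 = \<beta>"
    unfolding ffun_def Lf_def[symmetric] D t0(3) using L b by (simp add: field_simps)
  have ex: "\<exists>!r. 0 < r \<and> r < 1 \<and> ffun r (m0 r) = \<beta>"
  proof (rule ex1I[of _ rs])
    show "0 < rs \<and> rs < 1 \<and> ffun rs (m0 rs) = \<beta>" using rs0 rs1 m fv by simp
    fix r assume r: "0 < r \<and> r < 1 \<and> ffun r (m0 r) = \<beta>"
    show "r = rs" using g_mono[of r rs] g_mono[of rs r] r rs0 rs1 m fv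
      by (cases r rs rule: linorder_cases) auto
  qed
  have "0 < r2 \<beta> \<and> r2 \<beta> < 1 \<and> ffun (r2 \<beta>) (m0 (r2 \<beta>)) = \<beta>"
    unfolding r2_def by (rule theI'[OF ex])
  thus "0 < r2 \<beta>" "r2 \<beta> < 1" "ffun (r2 \<beta>) (m0 (r2 \<beta>)) = \<beta>" by auto
qed


lemma u_prop: assumes b: "\<beta> > 2" and r: "0 < r" "r < r2 \<beta>"
  shows "m0 r < ub \<beta> r" "ub \<beta> r < kr r" "ffun r (ub \<beta> r) = \<beta>"
proof -
  note R2 = r2_prop[OF b]
  have r1: "r < 1" using r R2 by simp
  note M = m0_prop[OF r(1) r1] and k = kr_facts[OF r(1) r1]
  have gr: "ffun r (m0 r) < \<beta>" using g_mono[OF r(1) r(2) R2(2)] R2(3) by simp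
  define K where "K = Lf (kr r)"
  have K0: "K > 0" unfolding K_def using Lf_pos k by simp
  define d where "d = min (3*(kr r - m0 r)/2) (K/(3*\<beta>))"
  have d0: "0 < d" unfolding d_def using M K0 b by simp
  have d1: "d \<le> 3*(kr r - m0 r)/2" "d \<le> K/(3*\<beta>)" unfolding d_def
    by (rule min.cobounded1, rule min.cobounded2)
  define t2 where "t2 = kr r - d/3"
  have t2: "m0 r < t2" "t2 < kr r" unfolding t2_def using d0 d1 M by auto
  have Dt2: "1 - r - 3*t2 = d" unfolding t2_def using k by simp
  have "Lf (kr r) < Lf t2" using Lf_dec[of t2 "kr r"] t2 M k by simp
  hence Lt2: "K \<le> Lf t2" unfolding K_def by simp
  have "3*d \<le> K/\<beta>" using d1 b by (simp add: field_simps)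
  hence "3*d*\<beta> \<le> K" using b by (simp add: field_simps)
  hence "2*\<beta> \<le> 2/(3*d) * K" using d0 b by (simp add: field_simps)
  also have "\<dots> \<le> 2/(3*d) * Lf t2" using Lt2 d0 by (intro mult_left_mono) auto
  also have "\<dots> = ffun r t2" unfolding ffun_def Lf_def Dt2 ..
  finally have ft2: "\<beta> < ffun r t2" using b by simp
  have "continuous_on {m0 r..t2} (ffun r)"
    by (rule ffun_cont) (use M t2 k in \<open>auto simp: kr_def\<close>)
  then obtain u where u: "m0 r \<le> u" "u \<le> t2" "ffun r u = \<beta>"
    using IVT'[of "ffun r" "m0 r" \<beta> t2] gr ft2 t2 by auto
  have "u \<noteq> m0 r" using u gr by auto
  hence u': "m0 r < u" "u < kr r" using u t2 by auto
  have ex: "\<exists>!t. m0 r < t \<and> t < kr r \<and> ffun r t = \<beta>"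
  proof (rule ex1I[of _ u])
    show "m0 r < u \<and> u < kr r \<and> ffun r u = \<beta>" using u' u by simp
    fix t assume "m0 r < t \<and> t < kr r \<and> ffun r t = \<beta>"
    thus "t = u" using f_inc_lo[OF r(1) r1, of t u] f_inc_lo[OF r(1) r1, of u t] u' u
      by (cases t u rule: linorder_cases) auto
  qed
  have "m0 r < ub \<beta> r \<and> ub \<beta> r < kr r \<and> ffun r (ub \<beta> r) = \<beta>"
    unfolding ub_def by (rule theI'[OF ex])
  thus "m0 r < ub \<beta> r" "ub \<beta> r < kr r" "ffun r (ub \<beta> r) = \<beta>" by auto
qed

lemma case2: assumes b: "\<beta> > 2" and r: "0 < r" "r < r2 \<beta>"
  shows "Fbeta \<beta> (sigma0 \<beta> r) r < Fbeta \<beta> (pb \<beta> r) r"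
proof -
  note R2 = r2_prop[OF b]
  have r1: "r < 1" using r R2 by simp
  note M = m0_prop[OF r(1) r1] and k = kr_facts[OF r(1) r1]
  note U = u_prop[OF b r] and Q = q_prop[OF b r(1)]
  define u where "u = ub \<beta> r"
  define q where "q = qb \<beta> r"
  have uq: "0 < u" "u < q" "u < kr r" "1/3 < q" "q < 1/2" "ffun r u = \<beta>"
    using U Q M k unfolding u_def q_def by auto
  have bn: "\<beta> \<noteq> 0" using b by simp
  have "phiR \<beta> r q < phiR \<beta> r u"
  proof (rule DERIV_neg_imp_decreasing_open[OF uq(2)])
    fix x assume x: "u < x" "x < q"
    have x': "0 < x" "x < 1/2" using x uq by auto
    have "psi0 \<beta> r x < 0"
    proof (cases "x < kr r")
      case True
      have D: "1 - r - 3*x > 0" using True unfolding kr_def by simp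
      have "ffun r x > \<beta>" using f_inc_lo[OF r(1) r1, of u x] U x True uq unfolding u_def by simp
      hence "1 - ffun r x/\<beta> < 0" using b by (simp add: field_simps)
      hence "3/2*(1-r-3*x)*(1 - ffun r x/\<beta>) < 0" using D by (intro mult_pos_neg) auto
      thus ?thesis using psi0_ffun[of r x \<beta>] D bn by simp
    next
      case False
      show ?thesis
      proof (cases "x \<le> 1/3")
        case True
        have D: "1 - r - 3*x \<le> 0" using False unfolding kr_def by simp
        have "Lf x \<ge> 0"
        proof (cases "x = 1/3")
          case True show ?thesis unfolding True Lf_third by simp
        next
          case False thus ?thesis using Lf_pos[of x] \<open>x \<le> 1/3\<close> x' by simp
        qed
        moreover have "Lf x > 0 \<or> 1 - r - 3*x < 0"
        proof (cases "x = kr r")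
          case True thus ?thesis using Lf_pos[of x] k by simp
        next
          case False thus ?thesis using D k \<open>\<not> x < kr r\<close> unfolding kr_def by auto
        qed
        ultimately have "Lf x / \<beta> \<ge> 0" "Lf x / \<beta> > 0 \<or> 1 - r - 3*x < 0" using b by auto
        hence A: "Lf x / \<beta> \<ge> 0" and B: "Lf x / \<beta> > 0 \<or> 1 - r - 3*x < 0" by auto
        from B show ?thesis
        proof
          assume p: "Lf x / \<beta> > 0"
          have "3/2*(1-r-3*x) \<le> 0" using D by simp
          thus ?thesis unfolding psi0_def using p by linarith
        next
          assume p: "1 - r - 3*x < 0"
          have "3/2*(1-r-3*x) < 0" using p by simp
          thus ?thesis unfolding psi0_def using A by linarith
        qed
      next
        case False
        thus ?thesis using psi0_sign_hi(1)[OF b r(1) _ x'(2)] x unfolding q_def by simp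
      qed
    qed
    thus "\<exists>y. DERIV (phiR \<beta> r) x :> y \<and> y < 0" using phiR_deriv[OF x' bn, of r] by force
  qed (rule phiR_cont, use uq bn in auto)
  moreover have "Fbeta \<beta> (sigma0 \<beta> r) r = 1/4 - r/2 + ln 3/\<beta> + phiR \<beta> r q"
    unfolding sigma0_def q_def[symmetric] using phi_eq uq by simp
  moreover have "Fbeta \<beta> (pb \<beta> r) r = 1/4 - r/2 + ln 3/\<beta> + phiR \<beta> r u"
    unfolding pb_def u_def[symmetric] using phi_eq uq by simp
  ultimately show ?thesis by simp
qed

theorem lemma5p10:
  fixes \<beta> r :: real
  assumes "\<beta> > 2"
    and "(0 < r \<and> r < r1 \<beta>) \<or> (r1 \<beta> < r \<and> r < r2 \<beta>)"
  shows "Fbeta \<beta> (sigma0 \<beta> r) r <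
         (if r < r1 \<beta> then Fbeta \<beta> (sigma1 \<beta> r) r else Fbeta \<beta> (pb \<beta> r) r)"
proof (cases "r < r1 \<beta>")
  case True
  hence "0 < r" using assms(2) by auto
  thus ?thesis using case1[OF assms(1) _ True] True by simp
next
  case False
  hence r: "r1 \<beta> < r" "r < r2 \<beta>" using assms(2) by auto
  hence "0 < r" using r1_pos[OF assms(1)] by simp
  thus ?thesis using case2[OF assms(1) _ r(2)] False by simp
qed

end
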